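(* Let $\mathbf P$ be a cyclic CFSM protocol with communication graph $G=(N,E)$. Let $\Gamma$ be a path in the global state space of $\mathbf P$ from a global state $(S,C^0)$ to a global state $(S',C^0)$. Then for every edge $\beta\in E$ there exists a path $\Gamma'$ in the global state space such that (a) $\Gamma$ and $\Gamma'$ are locally equal, and (b) every global state $(S'',(x_\xi:\xi\in E))$ on $\Gamma'$ satisfies $\sum_{\xi\in E,\ \xi\neq\beta}|x_\xi|\le 1$.
   Context: A CFSM protocol $\mathbf P$ consists of: a finite directed graph $G=(N,E)$ (the communication graph; each edge $\xi\in E$ has a tail $-\xi\in N$ and a head $+\xi\in N$); pairwise disjoint finite sets $M_\xi$ of messages, $\xi\in E$; and for each $j\in N$ a finite state machine $F_j=(K_j,\Sigma_j,T_j,h_j)$, where $K_j$ is a finite set of states, $h_j\in K_j$ is the initial state, $\Sigma_j=\{+b: b\in M_\xi,\ j=+\xi\}\cup\{-b: b\in M_\xi,\ j=-\xi\}$, and $T_j\subseteq K_j\times\Sigma_j\times K_j$ is the set of transitions, written $p\xrightarrow{e}q$ ($+b$ means "receive $b$", $-b$ means "send $b$"). A composite state is a vector $S=(p_j:j\in N)$ with $p_j\in K_j$; a channel content is $C=(x_\xi:\xi\in E)$ with $x_\xi\in M_\xi^*$; a global state is a pair $(S,C)$. $C^0$ denotes the channel content with all components equal to the empty word $\lambda$; the initial global state is $(S^0,C^0)$ with $S^0=(h_j:j\in N)$. Steps: with $S=(p_j)$, $S'=(q_j)$, $C=(x_\xi)$, $C'=(y_\xi)$, we write $(S,C)\vdash^{+b}(S',C')$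 if there is $\beta\in E$ with $i=+\beta$, $b\in M_\beta$, $p_i\xrightarrow{+b}q_i$ in $F_i$, $p_j=q_j$ for $j\neq i$, $x_\beta=b\,y_\beta$ and $x_\xi=y_\xi$ for $\xi\neq\beta$; and $(S,C)\vdash^{-b}(S',C')$ if there is $\beta\in E$ with $i=-\beta$, $b\in M_\beta$, $p_i\xrightarrow{-b}q_i$ in $F_i$, $p_j=q_j$ for $j\ne i$, $y_\beta=x_\beta b$ and $y_\xi=x_\xi$ for $\xi\neq\beta$. A global state is reachable if it can be reached from $(S^0,C^0)$ by a finite sequence of steps. The global state space is the labelled directed graph whose nodes are the reachable global states and whose edges are these steps; a path is a finite sequence of consecutive steps. For a path $\Gamma=(S_0,C_0)\vdash^{e_1}\cdots\vdash^{e_k}(S_k,C_k)$ and $i\in N$, the image of $\Gamma$ in $F_i$ is the path in the transition diagram of $F_i$, starting at the $i$-th component of $S_0$, formed (in order) by the transitions of $F_i$ performed at those steps $t$ with $e_t\in\Sigma_i$ (a path of length 0 if there are none). Two paths are locally equal if their images in $F_i$ coincide for every $i\in N$. A protocol is cyclic if its communication graph is a directed cycle. *)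

theory Defs
  imports Main
begin

text \<open>Actions: Recv b is "+b" (receive b), Send b is "-b" (send b).\<close>
datatype 'm act = Recv 'm | Send 'm

record ('n, 'e, 'm, 's) cfsm =
  nodes :: "'n set"
  edges :: "'e set"
  etail :: "'e \<Rightarrow> 'n"
  ehead :: "'e \<Rightarrow> 'n"
  msgs  :: "'e \<Rightarrow> 'm set"
  states :: "'n \<Rightarrow> 's set"
  trans :: "'n \<Rightarrow> ('s \<times> 'm act \<times> 's) set"
  init  :: "'n \<Rightarrow> 's"

definition alphabet :: "('n, 'e, 'm, 's) cfsm \<Rightarrow> 'n \<Rightarrow> 'm act set" where
  "alphabet P j =
     {Recv b | b \<xi>. \<xi> \<in> edges P \<and> b \<in> msgs P \<xi> \<and> j = ehead P \<xi>} \<union>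
     {Send b | b \<xi>. \<xi> \<in> edges P \<and> b \<in> msgs P \<xi> \<and> j = etail P \<xi>}"

definition cfsm_protocol :: "('n, 'e, 'm, 's) cfsm \<Rightarrow> bool" where
  "cfsm_protocol P \<longleftrightarrow>
     finite (nodes P) \<and> finite (edges P) \<and>
     (\<forall>\<xi>\<in>edges P. etail P \<xi> \<in> nodes P \<and> ehead P \<xi> \<in> nodes P) \<and>
     (\<forall>\<xi>\<in>edges P. finite (msgs P \<xi>)) \<and>
     (\<forall>\<xi>\<in>edges P. \<forall>\<eta>\<in>edges P. \<xi> \<noteq> \<eta> \<longrightarrow> msgs P \<xi> \<inter> msgs P \<eta> = {}) \<and>
     (\<forall>j\<in>nodes P. finite (states P j) \<and> init P j \<in> states P j \<and>
        trans P j \<subseteq> states P j \<times> alphabet P j \<times> states P j)"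

definition cyclic :: "('n, 'e, 'm, 's) cfsm \<Rightarrow> bool" where
  "cyclic P \<longleftrightarrow> (\<exists>vs es. vs \<noteq> [] \<and> length vs = length es \<and> distinct vs \<and> distinct es \<and>
     set vs = nodes P \<and> set es = edges P \<and>
     (\<forall>k<length es. etail P (es ! k) = vs ! k \<and>
                    ehead P (es ! k) = vs ! ((k + 1) mod length vs)))"

type_synonym ('n, 'e, 'm, 's) gstate = "('n \<Rightarrow> 's) \<times> ('e \<Rightarrow> 'm list)"

definition C0 :: "'e \<Rightarrow> 'm list" where
  "C0 = (\<lambda>_. [])"

fun step :: "('n, 'e, 'm, 's) cfsm \<Rightarrow> ('n, 'e, 'm, 's) gstate \<Rightarrow> 'm act
               \<Rightarrow> ('n, 'e, 'm, 's) gstate \<Rightarrow> bool" where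
  "step P (S, C) (Recv b) (S', C') \<longleftrightarrow>
     (\<exists>\<beta>\<in>edges P. b \<in> msgs P \<beta> \<and>
        (S (ehead P \<beta>), Recv b, S' (ehead P \<beta>)) \<in> trans P (ehead P \<beta>) \<and>
        (\<forall>j. j \<noteq> ehead P \<beta> \<longrightarrow> S j = S' j) \<and>
        C \<beta> = b # C' \<beta> \<and> (\<forall>\<xi>. \<xi> \<noteq> \<beta> \<longrightarrow> C \<xi> = C' \<xi>))"
| "step P (S, C) (Send b) (S', C') \<longleftrightarrow>
     (\<exists>\<beta>\<in>edges P. b \<in> msgs P \<beta> \<and>
        (S (etail P \<beta>), Send b, S' (etail P \<beta>)) \<in> trans P (etail P \<beta>) \<and>
        (\<forall>j. j \<noteq> etail P \<beta> \<longrightarrow> S j = S' j) \<and>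
        C' \<beta> = C \<beta> @ [b] \<and> (\<forall>\<xi>. \<xi> \<noteq> \<beta> \<longrightarrow> C \<xi> = C' \<xi>))"

definition initial :: "('n, 'e, 'm, 's) cfsm \<Rightarrow> ('n, 'e, 'm, 's) gstate" where
  "initial P = (init P, C0)"

definition reachable :: "('n, 'e, 'm, 's) cfsm \<Rightarrow> ('n, 'e, 'm, 's) gstate \<Rightarrow> bool" where
  "reachable P g \<longleftrightarrow> (\<lambda>x y. \<exists>a. step P x a y)\<^sup>*\<^sup>* (initial P) g"

fun steps_from :: "('n, 'e, 'm, 's) cfsm \<Rightarrow> ('n, 'e, 'm, 's) gstate
                     \<Rightarrow> ('m act \<times> ('n, 'e, 'm, 's) gstate) list \<Rightarrow> bool" where
  "steps_from P g [] = True"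
| "steps_from P g ((a, g') # rest) = (step P g a g' \<and> steps_from P g' rest)"

definition is_path :: "('n, 'e, 'm, 's) cfsm \<Rightarrow> ('n, 'e, 'm, 's) gstate
                        \<Rightarrow> ('m act \<times> ('n, 'e, 'm, 's) gstate) list \<Rightarrow> bool" where
  "is_path P g0 ss \<longleftrightarrow> reachable P g0 \<and> steps_from P g0 ss"

definition path_states :: "('n, 'e, 'm, 's) gstate \<Rightarrow> ('m act \<times> ('n, 'e, 'm, 's) gstate) list
                            \<Rightarrow> ('n, 'e, 'm, 's) gstate list" where
  "path_states g0 ss = g0 # map snd ss"

definition path_end :: "('n, 'e, 'm, 's) gstate \<Rightarrow> ('m act \<times> ('n, 'e, 'm, 's) gstate) list
                         \<Rightarrow> ('n, 'e, 'm, 's) gstate" where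
  "path_end g0 ss = last (path_states g0 ss)"

fun image_trans :: "('n, 'e, 'm, 's) cfsm \<Rightarrow> 'n \<Rightarrow> ('n, 'e, 'm, 's) gstate
                     \<Rightarrow> ('m act \<times> ('n, 'e, 'm, 's) gstate) list \<Rightarrow> ('s \<times> 'm act \<times> 's) list" where
  "image_trans P i g [] = []"
| "image_trans P i g ((a, g') # rest) =
     (if a \<in> alphabet P i then [(fst g i, a, fst g' i)] else []) @ image_trans P i g' rest"

definition path_image :: "('n, 'e, 'm, 's) cfsm \<Rightarrow> 'n \<Rightarrow> ('n, 'e, 'm, 's) gstate
                     \<Rightarrow> ('m act \<times> ('n, 'e, 'm, 's) gstate) list \<Rightarrow> 's \<times> ('s \<times> 'm act \<times> 's) list" where
  "path_image P i g0 ss = (fst g0 i, image_trans P i g0 ss)"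

definition locally_equal :: "('n, 'e, 'm, 's) cfsm
    \<Rightarrow> ('n, 'e, 'm, 's) gstate \<Rightarrow> ('m act \<times> ('n, 'e, 'm, 's) gstate) list
    \<Rightarrow> ('n, 'e, 'm, 's) gstate \<Rightarrow> ('m act \<times> ('n, 'e, 'm, 's) gstate) list \<Rightarrow> bool" where
  "locally_equal P g0 ss g0' ss' \<longleftrightarrow>
     (\<forall>i\<in>nodes P. path_image P i g0 ss = path_image P i g0' ss')"

end

theory Submission
  imports Defs
begin


lemma msgs_unique:
  "cfsm_protocol P \<Longrightarrow> \<xi> \<in> edges P \<Longrightarrow> \<eta> \<in> edges P \<Longrightarrow> b \<in> msgs P \<xi> \<Longrightarrow> b \<in> msgs P \<eta> \<Longrightarrow> \<xi> = \<eta>"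
  unfolding cfsm_protocol_def by blast

lemma alph_unique:
  assumes "cfsm_protocol P" "a \<in> alphabet P i" "a \<in> alphabet P j" shows "i = j"
  using assms(2,3) msgs_unique[OF assms(1)] unfolding alphabet_def by auto

lemma step_other: "step P g a g' \<Longrightarrow> a \<notin> alphabet P k \<Longrightarrow> fst g' k = fst g k"
  by (cases g; cases g'; cases a) (auto simp: alphabet_def)

lemma step_actor: "cfsm_protocol P \<Longrightarrow> step P g a g' \<Longrightarrow> \<exists>j\<in>nodes P. a \<in> alphabet P j"
  by (cases g; cases g'; cases a) (auto simp: alphabet_def cfsm_protocol_def)

definition enabled :: "('n, 'e, 'm, 's) cfsm \<Rightarrow> ('n, 'e, 'm, 's) gstate \<Rightarrow> 'm act \<Rightarrow> bool" where
  "enabled P g a = (case a of Send b \<Rightarrow> True | Recv b \<Rightarrow> (\<exists>e\<in>edges P. b \<in> msgs P e \<and> snd g e \<noteq> []))"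

lemma step_enabled: "step P g a g' \<Longrightarrow> enabled P g a"
  by (cases g; cases g'; cases a) (auto simp: enabled_def)

lemma image_trans_alph: "x \<in> set (image_trans P i g \<Gamma>) \<Longrightarrow> fst (snd x) \<in> alphabet P i"
  by (induction \<Gamma> arbitrary: g) (auto split: if_splits)

lemma chan_grow: "step P g x g' \<Longrightarrow> e \<in> edges P \<Longrightarrow> x \<notin> alphabet P (ehead P e) \<Longrightarrow> \<exists>w. snd g' e = snd g e @ w"
  apply (cases g; cases g'; cases x)
   apply (auto simp: alphabet_def)
  apply (metis append.right_neutral)+
  done

lemma path_end_Cons[simp]: "path_end g ((a,g')#\<Gamma>) = path_end g' \<Gamma>"
  by (simp add: path_end_def path_states_def)

lemma path_end_Nil[simp]: "path_end g [] = g"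
  by (simp add: path_end_def path_states_def)

lemma enabled_pres:
  assumes "cfsm_protocol P" "step P g x gx" "x \<notin> alphabet P i" "a \<in> alphabet P i" "enabled P g a"
  shows "enabled P gx a"
proof (cases a)
  case (Recv b)
  then obtain e where e: "e \<in> edges P" "b \<in> msgs P e" "i = ehead P e"
    using assms(4) by (auto simp: alphabet_def)
  obtain e' where e': "e' \<in> edges P" "b \<in> msgs P e'" "snd g e' \<noteq> []"
    using assms(5) Recv by (auto simp: enabled_def)
  have "e' = e" using msgs_unique[OF assms(1) e'(1) e(1) e'(2) e(2)] .
  then obtain w where "snd gx e = snd g e @ w" using chan_grow[OF assms(2) e(1)] assms(3) e(3) by auto
  then show ?thesis using Recv e e' \<open>e' = e\<close> by (auto simp: enabled_def)
qed (simp add: enabled_def)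


lemma step_Send_iff: "step P (S,C) (Send b) (S',C') \<longleftrightarrow> (\<exists>\<xi>\<in>edges P. b \<in> msgs P \<xi> \<and>
   (\<exists>q. (S (etail P \<xi>), Send b, q) \<in> trans P (etail P \<xi>) \<and>
   S' = S(etail P \<xi> := q)) \<and> C' = C(\<xi> := C \<xi> @ [b]))" (is "?L \<longleftrightarrow> ?R")
proof
  assume ?L
  then obtain \<xi> where h: "\<xi> \<in> edges P" "b \<in> msgs P \<xi>"
    "(S (etail P \<xi>), Send b, S' (etail P \<xi>)) \<in> trans P (etail P \<xi>)"
    "\<forall>j. j \<noteq> etail P \<xi> \<longrightarrow> S j = S' j" "C' \<xi> = C \<xi> @ [b]" "\<forall>\<eta>. \<eta> \<noteq> \<xi> \<longrightarrow> C \<eta> = C' \<eta>"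
    by auto
  have "S' = S(etail P \<xi> := S' (etail P \<xi>))" using h(4) by (auto simp: fun_eq_iff)
  moreover have "C' = C(\<xi> := C \<xi> @ [b])" using h(5,6) by (auto simp: fun_eq_iff)
  ultimately show ?R using h(1-3) by blast
next
  assume ?R then show ?L by auto
qed

lemma step_Recv_iff: "step P (S,C) (Recv b) (S',C') \<longleftrightarrow> (\<exists>\<xi>\<in>edges P. b \<in> msgs P \<xi> \<and>
   (\<exists>q. (S (ehead P \<xi>), Recv b, q) \<in> trans P (ehead P \<xi>) \<and>
   S' = S(ehead P \<xi> := q)) \<and> C \<xi> \<noteq> [] \<and> hd (C \<xi>) = b \<and> C' = C(\<xi> := tl (C \<xi>)))" (is "?L \<longleftrightarrow> ?R")
proof
  assume ?L
  then obtain \<xi> where h: "\<xi> \<in> edges P" "b \<in> msgs P \<xi>"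
    "(S (ehead P \<xi>), Recv b, S' (ehead P \<xi>)) \<in> trans P (ehead P \<xi>)"
    "\<forall>j. j \<noteq> ehead P \<xi> \<longrightarrow> S j = S' j" "C \<xi> = b # C' \<xi>" "\<forall>\<eta>. \<eta> \<noteq> \<xi> \<longrightarrow> C \<eta> = C' \<eta>"
    by auto
  have "S' = S(ehead P \<xi> := S' (ehead P \<xi>))" using h(4) by (auto simp: fun_eq_iff)
  moreover have "C' = C(\<xi> := tl (C \<xi>))" using h(5,6) by (auto simp: fun_eq_iff)
  ultimately show ?R using h by auto
next
  assume ?R then show ?L by (auto simp: neq_Nil_conv)
qed

lemma diamond:
  assumes prot: "cfsm_protocol P" and sx: "step P g x gx" and sa: "step P gx a g2"
    and ai: "a \<in> alphabet P i" and xi: "x \<notin> alphabet P i" and en: "enabled P g a"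
  shows "\<exists>g1. step P g a g1 \<and> step P g1 x g2"
proof -
  obtain S C where g: "g = (S,C)" by fastforce
  obtain Sx Cx where gx: "gx = (Sx,Cx)" by fastforce
  obtain S2 C2 where g2: "g2 = (S2,C2)" by fastforce
  note mu = msgs_unique[OF prot]
  show ?thesis
  proof (cases x)
    case (Send b')
    then obtain \<xi> q where \<xi>: "\<xi>\<in>edges P" "b' \<in> msgs P \<xi>"
      "(S (etail P \<xi>), Send b', q) \<in> trans P (etail P \<xi>)"
      "Sx = S(etail P \<xi> := q)" "Cx = C(\<xi> := C \<xi> @ [b'])"
      using sx g gx step_Send_iff by metis
    have xa: "x \<in> alphabet P (etail P \<xi>)" using \<xi> Send by (auto simp: alphabet_def)
    show ?thesis
    proof (cases a)
      case (Send b)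
      then obtain \<eta> q2 where \<eta>: "\<eta>\<in>edges P" "b \<in> msgs P \<eta>"
        "(Sx (etail P \<eta>), Send b, q2) \<in> trans P (etail P \<eta>)"
        "S2 = Sx(etail P \<eta> := q2)" "C2 = Cx(\<eta> := Cx \<eta> @ [b])"
        using sa g2 gx step_Send_iff by metis
      have "a \<in> alphabet P (etail P \<eta>)" using \<eta> Send by (auto simp: alphabet_def)
      then have ie: "i = etail P \<eta>" using alph_unique[OF prot ai] by auto
      have ne: "etail P \<xi> \<noteq> etail P \<eta>" using xa xi ie by auto
      then have ne2: "\<xi> \<noteq> \<eta>" by auto
      let ?g1 = "(S(etail P \<eta> := q2), C(\<eta> := C \<eta> @ [b]))"
      have "step P g a ?g1" unfolding g Send step_Send_iff using \<eta> \<xi> ne by auto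
      moreover have "step P ?g1 x g2" unfolding g2 \<open>x = Send b'\<close> step_Send_iff
        using \<eta> \<xi> ne ne2 by (intro bexI[of _ \<xi>] conjI exI[of _ q]) (auto simp: fun_eq_iff)
      ultimately show ?thesis by blast
    next
      case (Recv b)
      then obtain \<eta> q2 where \<eta>: "\<eta>\<in>edges P" "b \<in> msgs P \<eta>"
        "(Sx (ehead P \<eta>), Recv b, q2) \<in> trans P (ehead P \<eta>)"
        "S2 = Sx(ehead P \<eta> := q2)" "Cx \<eta> \<noteq> []" "hd (Cx \<eta>) = b" "C2 = Cx(\<eta> := tl (Cx \<eta>))"
        using sa g2 gx step_Recv_iff by metis
      have "a \<in> alphabet P (ehead P \<eta>)" using \<eta> Recv by (auto simp: alphabet_def)
      then have ie: "i = ehead P \<eta>" using alph_unique[OF prot ai] by auto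
      have ne: "etail P \<xi> \<noteq> ehead P \<eta>" using xa xi ie by auto
      obtain e where e: "e \<in> edges P" "b \<in> msgs P e" "C e \<noteq> []" using en Recv g by (auto simp: enabled_def)
      have "e = \<eta>" using mu e \<eta> by blast
      have ce: "C \<eta> \<noteq> []" using e \<open>e = \<eta>\<close> by simp
      have hd: "hd (C \<eta>) = b" using \<eta>(6) \<xi>(5) ce by (cases "\<xi> = \<eta>") auto
      let ?g1 = "(S(ehead P \<eta> := q2), C(\<eta> := tl (C \<eta>)))"
      have s1: "step P g a ?g1" unfolding g Recv step_Recv_iff using \<eta>(1-3) \<xi>(4) ne hd ce
        by auto
      have eS: "S2 = (S(ehead P \<eta> := q2))(etail P \<xi> := q)" using \<eta>(4) \<xi>(4) ne
        by (simp add: fun_upd_twist)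
      have eC: "C2 = (C(\<eta> := tl (C \<eta>)))(\<xi> := (C(\<eta> := tl (C \<eta>))) \<xi> @ [b'])"
      proof (cases "\<xi> = \<eta>")
        case True then show ?thesis using \<eta>(7) \<xi>(5) ce by simp
      next
        case False then show ?thesis using \<eta>(7) \<xi>(5) by (simp add: fun_upd_twist)
      qed
      have "step P ?g1 x g2" unfolding g2 \<open>x = Send b'\<close> step_Send_iff
        using \<xi>(1-3) ne eS eC by auto
      then show ?thesis using s1 by blast
    qed
  next
    case (Recv b')
    then obtain \<xi> q where \<xi>: "\<xi>\<in>edges P" "b' \<in> msgs P \<xi>"
      "(S (ehead P \<xi>), Recv b', q) \<in> trans P (ehead P \<xi>)"
      "Sx = S(ehead P \<xi> := q)" "C \<xi> \<noteq> []" "hd (C \<xi>) = b'" "Cx = C(\<xi> := tl (C \<xi>))"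
      using sx g gx step_Recv_iff by metis
    have xa: "x \<in> alphabet P (ehead P \<xi>)" using \<xi> Recv by (auto simp: alphabet_def)
    show ?thesis
    proof (cases a)
      case (Send b)
      then obtain \<eta> q2 where \<eta>: "\<eta>\<in>edges P" "b \<in> msgs P \<eta>"
        "(Sx (etail P \<eta>), Send b, q2) \<in> trans P (etail P \<eta>)"
        "S2 = Sx(etail P \<eta> := q2)" "C2 = Cx(\<eta> := Cx \<eta> @ [b])"
        using sa g2 gx step_Send_iff by metis
      have "a \<in> alphabet P (etail P \<eta>)" using \<eta> Send by (auto simp: alphabet_def)
      then have ie: "i = etail P \<eta>" using alph_unique[OF prot ai] by auto
      have ne: "ehead P \<xi> \<noteq> etail P \<eta>" using xa xi ie by auto
      let ?g1 = "(S(etail P \<eta> := q2), C(\<eta> := C \<eta> @ [b]))"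
      have "step P g a ?g1" unfolding g Send step_Send_iff using \<eta> \<xi> ne
        by (intro bexI[of _ \<eta>] conjI exI[of _ q2]) (auto simp: fun_eq_iff)
      moreover have "step P ?g1 x g2" unfolding g2 \<open>x = Recv b'\<close> step_Recv_iff
        using \<eta> \<xi> ne by (intro bexI[of _ \<xi>] conjI exI[of _ q]) (auto simp: fun_eq_iff)
      ultimately show ?thesis by blast
    next
      case (Recv b)
      then obtain \<eta> q2 where \<eta>: "\<eta>\<in>edges P" "b \<in> msgs P \<eta>"
        "(Sx (ehead P \<eta>), Recv b, q2) \<in> trans P (ehead P \<eta>)"
        "S2 = Sx(ehead P \<eta> := q2)" "Cx \<eta> \<noteq> []" "hd (Cx \<eta>) = b" "C2 = Cx(\<eta> := tl (Cx \<eta>))"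
        using sa g2 gx step_Recv_iff by metis
      have "a \<in> alphabet P (ehead P \<eta>)" using \<eta> Recv by (auto simp: alphabet_def)
      then have ie: "i = ehead P \<eta>" using alph_unique[OF prot ai] by auto
      have ne: "ehead P \<xi> \<noteq> ehead P \<eta>" using xa xi ie by auto
      then have ne2: "\<xi> \<noteq> \<eta>" by auto
      let ?g1 = "(S(ehead P \<eta> := q2), C(\<eta> := tl (C \<eta>)))"
      have "step P g a ?g1" unfolding g Recv step_Recv_iff using \<eta> \<xi> ne ne2
        by (intro bexI[of _ \<eta>] conjI exI[of _ q2]) (auto simp: fun_eq_iff)
      moreover have "step P ?g1 x g2" unfolding g2 \<open>x = Recv b'\<close> step_Recv_iff
        using \<eta> \<xi> ne ne2 by (intro bexI[of _ \<xi>] conjI exI[of _ q]) (auto simp: fun_eq_iff)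
      ultimately show ?thesis by blast
    qed
  qed
qed



lemma mtf:
  assumes prot: "cfsm_protocol P"
  shows "steps_from P g \<Gamma> \<Longrightarrow> image_trans P i g \<Gamma> = (s,a,s') # rest \<Longrightarrow> enabled P g a \<Longrightarrow>
    \<exists>g1 \<Gamma>1. steps_from P g ((a,g1)#\<Gamma>1) \<and> (\<forall>k. image_trans P k g ((a,g1)#\<Gamma>1) = image_trans P k g \<Gamma>)
       \<and> path_end g ((a,g1)#\<Gamma>1) = path_end g \<Gamma> \<and> length \<Gamma>1 + 1 = length \<Gamma>"
proof (induction \<Gamma> arbitrary: g rest)
  case Nil
  then show ?case by simp
next
  case (Cons y \<Gamma>r)
  obtain x gx where y: "y = (x,gx)" by (cases y) blast
  have st: "step P g x gx" and sr: "steps_from P gx \<Gamma>r" using Cons.prems(1) y by auto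
  show ?case
  proof (cases "x \<in> alphabet P i")
    case True
    then have "x = a" using Cons.prems(2) y by simp
    then show ?thesis using Cons.prems(1) y by (intro exI[of _ gx] exI[of _ \<Gamma>r]) auto
  next
    case False
    have it: "image_trans P i gx \<Gamma>r = (s,a,s') # rest" using Cons.prems(2) y False by simp
    have ai: "a \<in> alphabet P i" using image_trans_alph[of "(s,a,s')" P i gx \<Gamma>r] it by simp
    have en: "enabled P gx a" using enabled_pres[OF prot st False ai Cons.prems(3)] .
    obtain g1' \<Gamma>1' where IH: "steps_from P gx ((a,g1')#\<Gamma>1')"
      "\<forall>k. image_trans P k gx ((a,g1')#\<Gamma>1') = image_trans P k gx \<Gamma>r"
      "path_end gx ((a,g1')#\<Gamma>1') = path_end gx \<Gamma>r" "length \<Gamma>1' + 1 = length \<Gamma>r"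
      using Cons.IH[OF sr it en] by blast
    have sa: "step P gx a g1'" and sr1: "steps_from P g1' \<Gamma>1'" using IH(1) by auto
    obtain g1 where d: "step P g a g1" "step P g1 x g1'" using diamond[OF prot st sa ai False Cons.prems(3)] by blast
    have img: "image_trans P k g ((a,g1)#(x,g1')#\<Gamma>1') = image_trans P k g (y#\<Gamma>r)" for k
    proof -
      have r: "image_trans P k gx \<Gamma>r = (if a \<in> alphabet P k then [(fst gx k, a, fst g1' k)] else []) @ image_trans P k g1' \<Gamma>1'"
        using IH(2) by (metis image_trans.simps(2))
      show ?thesis
      proof (cases "a \<in> alphabet P k")
        case True
        then have "k = i" using alph_unique[OF prot True ai] by simp
        then have "x \<notin> alphabet P k" using False by simp
        moreover have "fst gx k = fst g k" using step_other[OF st] \<open>x \<notin> alphabet P k\<close> .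
        moreover have "fst g1' k = fst g1 k" using step_other[OF d(2)] \<open>x \<notin> alphabet P k\<close> .
        ultimately show ?thesis using True r y by simp
      next
        case aF: False
        have "fst g1 k = fst g k" using step_other[OF d(1) aF] .
        moreover have "fst g1' k = fst gx k" using step_other[OF sa aF] .
        ultimately show ?thesis using aF r y by simp
      qed
    qed
    show ?thesis
      apply (rule exI[of _ g1], rule exI[of _ "(x,g1')#\<Gamma>1'"])
      using d sr1 img IH(3,4) y by simp
  qed
qed

lemma chan_grow_path: "steps_from P g \<Gamma> \<Longrightarrow> e \<in> edges P \<Longrightarrow> image_trans P (ehead P e) g \<Gamma> = [] \<Longrightarrow>
   \<exists>w. snd (path_end g \<Gamma>) e = snd g e @ w"
proof (induction \<Gamma> arbitrary: g)
  case Nil then show ?case by simp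
next
  case (Cons y \<Gamma>r)
  obtain x gx where y: "y = (x,gx)" by (cases y) blast
  have st: "step P g x gx" and sr: "steps_from P gx \<Gamma>r" using Cons.prems(1) y by auto
  have nx: "x \<notin> alphabet P (ehead P e)" and r: "image_trans P (ehead P e) gx \<Gamma>r = []"
    using Cons.prems(3) y by (auto split: if_splits)
  obtain w1 where "snd gx e = snd g e @ w1" using chan_grow[OF st Cons.prems(2) nx] by blast
  moreover obtain w2 where "snd (path_end gx \<Gamma>r) e = snd gx e @ w2" using Cons.IH[OF sr Cons.prems(2) r] by blast
  ultimately show ?case using y by auto
qed



lemma step_Send_chan:
  assumes prot: "cfsm_protocol P" and st: "step P g (Send b) g'" and e: "e \<in> edges P" "b \<in> msgs P e"
  shows "snd g' = (snd g)(e := snd g e @ [b])"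
proof -
  obtain S C where g: "g = (S,C)" by fastforce
  obtain S' C' where g': "g' = (S',C')" by fastforce
  obtain \<xi> where "\<xi> \<in> edges P" "b \<in> msgs P \<xi>" "C' = C(\<xi> := C \<xi> @ [b])"
    using st unfolding g g' step_Send_iff by blast
  moreover have "\<xi> = e" using msgs_unique[OF prot] e calculation by blast
  ultimately show ?thesis using g g' by simp
qed

lemma step_Recv_chan:
  assumes prot: "cfsm_protocol P" and st: "step P g (Recv b) g'" and e: "e \<in> edges P" "b \<in> msgs P e"
  shows "snd g' = (snd g)(e := tl (snd g e))"
proof -
  obtain S C where g: "g = (S,C)" by fastforce
  obtain S' C' where g': "g' = (S',C')" by fastforce
  obtain \<xi> where "\<xi> \<in> edges P" "b \<in> msgs P \<xi>" "C' = C(\<xi> := tl (C \<xi>))"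
    using st unfolding g g' step_Recv_iff by blast
  moreover have "\<xi> = e" using msgs_unique[OF prot] e calculation by blast
  ultimately show ?thesis using g g' by simp
qed

lemma path_states_Cons[simp]: "path_states g ((a,g')#\<Gamma>) = g # path_states g' \<Gamma>"
  by (simp add: path_states_def)

lemma path_states_Nil[simp]: "path_states g [] = [g]"
  by (simp add: path_states_def)

definition line_empty :: "('n, 'e, 'm, 's) cfsm \<Rightarrow> 'e \<Rightarrow> ('n, 'e, 'm, 's) gstate \<Rightarrow> bool" where
  "line_empty P \<beta> g = (\<forall>\<xi>\<in>edges P - {\<beta>}. snd g \<xi> = [])"

lemma line_empty_sum: "line_empty P \<beta> g \<Longrightarrow> (\<Sum>\<xi>\<in>edges P - {\<beta>}. length (snd g \<xi>)) = 0"
  unfolding line_empty_def by simp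

lemma main:
  fixes rank :: "'n \<Rightarrow> nat"
  assumes prot: "cfsm_protocol P" and bE: "\<beta> \<in> edges P"
   and rk: "\<forall>e\<in>edges P - {\<beta>}. rank (etail P e) < rank (ehead P e)"
   and uq: "\<forall>e\<in>edges P. \<forall>e'\<in>edges P. ehead P e = ehead P e' \<longrightarrow> e = e'"
  shows "steps_from P g \<Gamma> \<Longrightarrow> line_empty P \<beta> g \<Longrightarrow> line_empty P \<beta> (path_end g \<Gamma>) \<Longrightarrow>
    \<exists>\<Gamma>'. steps_from P g \<Gamma>' \<and> (\<forall>k. image_trans P k g \<Gamma>' = image_trans P k g \<Gamma>) \<and>
      (\<forall>h\<in>set (path_states g \<Gamma>'). (\<Sum>\<xi>\<in>edges P - {\<beta>}. length (snd h \<xi>)) \<le> 1)"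
proof (induction "length \<Gamma>" arbitrary: g \<Gamma> rule: less_induct)
  case less
  note sf = less.prems(1) and le0 = less.prems(2) and leE = less.prems(3)
  have s0: "(\<Sum>\<xi>\<in>edges P - {\<beta>}. length (snd g \<xi>)) = 0" using line_empty_sum[OF le0] .
  show ?case
  proof (cases \<Gamma>)
    case Nil
    then show ?thesis using s0 by (intro exI[of _ "[]"]) simp
  next
    case (Cons y \<Gamma>r)
    obtain x gx where y: "y = (x,gx)" by (cases y) blast
    have st: "step P g x gx" using sf Cons y by simp
    define cand where "cand = {i \<in> nodes P. \<exists>s a s' rest. image_trans P i g \<Gamma> = (s,a,s')#rest \<and> enabled P g a}"
    obtain j where j: "j \<in> nodes P" "x \<in> alphabet P j" using step_actor[OF prot st] by blast
    have "j \<in> cand" unfolding cand_def using j step_enabled[OF st] Cons y by auto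
    have fin: "finite cand" using prot unfolding cand_def cfsm_protocol_def by auto
    have "Max (rank ` cand) \<in> rank ` cand" using fin \<open>j \<in> cand\<close> by (intro Max_in) auto
    then obtain h where h: "h \<in> cand" "rank h = Max (rank ` cand)" by auto
    have hmax: "rank i \<le> rank h" if "i \<in> cand" for i using h(2) fin that by simp
    obtain s a s' rest where hi: "image_trans P h g \<Gamma> = (s,a,s')#rest" and en: "enabled P g a"
      using h(1) unfolding cand_def by blast
    have ah: "a \<in> alphabet P h" using image_trans_alph[of "(s,a,s')" P h g \<Gamma>] hi by simp
    obtain g1 \<Gamma>1 where m1: "steps_from P g ((a,g1)#\<Gamma>1)" "\<forall>k. image_trans P k g ((a,g1)#\<Gamma>1) = image_trans P k g \<Gamma>"
       "path_end g ((a,g1)#\<Gamma>1) = path_end g \<Gamma>" "length \<Gamma>1 + 1 = length \<Gamma>"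
      using mtf[OF prot sf hi en] by blast
    have sa: "step P g a g1" and sf1: "steps_from P g1 \<Gamma>1" using m1(1) by auto
    have pe1: "path_end g1 \<Gamma>1 = path_end g \<Gamma>" using m1(3) by simp
    obtain e b where e: "e \<in> edges P" "b \<in> msgs P e"
      "(a = Send b \<and> h = etail P e) \<or> (a = Recv b \<and> h = ehead P e)"
      using ah unfolding alphabet_def by blast
    show ?thesis
    proof (cases "e = \<beta>")
      case True
      have ch: "snd g1 \<xi> = snd g \<xi>" if "\<xi> \<noteq> \<beta>" for \<xi>
        using e(3)
      proof
        assume "a = Send b \<and> h = etail P e"
        then show ?thesis using step_Send_chan[OF prot _ e(1,2)] sa True that by auto
      next
        assume "a = Recv b \<and> h = ehead P e"
        then show ?thesis using step_Recv_chan[OF prot _ e(1,2)] sa True that by auto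
      qed
      have le1: "line_empty P \<beta> g1" using le0 ch unfolding line_empty_def by auto
      obtain \<Gamma>1' where r: "steps_from P g1 \<Gamma>1'" "\<forall>k. image_trans P k g1 \<Gamma>1' = image_trans P k g1 \<Gamma>1"
        "\<forall>h\<in>set (path_states g1 \<Gamma>1'). (\<Sum>\<xi>\<in>edges P - {\<beta>}. length (snd h \<xi>)) \<le> 1"
        using less.hyps[of \<Gamma>1 g1] m1(4) sf1 le1 leE pe1 by auto
      show ?thesis
        apply (rule exI[of _ "(a,g1)#\<Gamma>1'"])
        using sa r s0 m1(2) by (simp add: )
    next
      case False
      then have "e \<in> edges P - {\<beta>}" using e by simp
      then have ge: "snd g e = []" using le0 unfolding line_empty_def by simp
      have aS: "a = Send b" and he: "h = etail P e"
      proof -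
        have "a \<noteq> Recv b"
        proof
          assume "a = Recv b"
          then obtain e' where "e' \<in> edges P" "b \<in> msgs P e'" "snd g e' \<noteq> []" using en by (auto simp: enabled_def)
          moreover have "e' = e" using msgs_unique[OF prot] e(1,2) calculation by blast
          ultimately show False using ge by simp
        qed
        then show "a = Send b" "h = etail P e" using e by auto
      qed
      have c1: "snd g1 = (snd g)(e := [b])" using step_Send_chan[OF prot sa[unfolded aS] e(1,2)] ge by simp
      define h' where "h' = ehead P e"
      have rkh: "rank h < rank h'" using rk \<open>e \<in> edges P - {\<beta>}\<close> he h'_def by auto
      have h'N: "h' \<in> nodes P" using prot e(1) h'_def unfolding cfsm_protocol_def by auto
      have ne1: "image_trans P h' g1 \<Gamma>1 \<noteq> []"
      proof
        assume "image_trans P h' g1 \<Gamma>1 = []"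
        then obtain w where "snd (path_end g1 \<Gamma>1) e = snd g1 e @ w"
          using chan_grow_path[OF sf1 e(1)] h'_def by blast
        then show False using leE pe1 c1 \<open>e \<in> edges P - {\<beta>}\<close> unfolding line_empty_def by auto
      qed
      then obtain s2 a2 s2' rest2 where hi2: "image_trans P h' g1 \<Gamma>1 = (s2,a2,s2')#rest2"
        by (metis list.exhaust prod_cases3)
      have "a \<notin> alphabet P h'" using alph_unique[OF prot ah] rkh by auto
      then have "image_trans P h' g ((a,g1)#\<Gamma>1) = image_trans P h' g1 \<Gamma>1" by simp
      then have "image_trans P h' g \<Gamma> = (s2,a2,s2')#rest2" using m1(2) hi2 by metis
      moreover have "h' \<notin> cand" using hmax rkh by force
      ultimately have nen: "\<not> enabled P g a2" using h'N unfolding cand_def by blast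
      have a2h: "a2 \<in> alphabet P h'" using image_trans_alph[of "(s2,a2,s2')" P h' g1 \<Gamma>1] hi2 by simp
      obtain b2 where a2: "a2 = Recv b2" "b2 \<in> msgs P e"
      proof (cases a2)
        case (Recv b2)
        then obtain e2 where "e2 \<in> edges P" "b2 \<in> msgs P e2" "h' = ehead P e2"
          using a2h unfolding alphabet_def by auto
        then have "e2 = e" using uq e(1) h'_def by auto
        then show ?thesis using that Recv \<open>b2 \<in> msgs P e2\<close> by blast
      next
        case (Send b2) then show ?thesis using nen by (simp add: enabled_def)
      qed
      have en2: "enabled P g1 a2" using a2 e(1) c1 by (auto simp: enabled_def)
      obtain g2 \<Gamma>2 where m2: "steps_from P g1 ((a2,g2)#\<Gamma>2)" "\<forall>k. image_trans P k g1 ((a2,g2)#\<Gamma>2) = image_trans P k g1 \<Gamma>1"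
         "path_end g1 ((a2,g2)#\<Gamma>2) = path_end g1 \<Gamma>1" "length \<Gamma>2 + 1 = length \<Gamma>1"
        using mtf[OF prot sf1 hi2 en2] by blast
      have sa2: "step P g1 a2 g2" and sf2: "steps_from P g2 \<Gamma>2" using m2(1) by auto
      have c2: "snd g2 = (snd g)(e := [])" using step_Recv_chan[OF prot sa2[unfolded a2(1)] e(1) a2(2)] c1 by simp
      have le2: "line_empty P \<beta> g2" using le0 c2 unfolding line_empty_def by auto
      have pe2: "path_end g2 \<Gamma>2 = path_end g \<Gamma>" using m2(3) pe1 by simp
      obtain \<Gamma>2' where r: "steps_from P g2 \<Gamma>2'" "\<forall>k. image_trans P k g2 \<Gamma>2' = image_trans P k g2 \<Gamma>2"
        "\<forall>h\<in>set (path_states g2 \<Gamma>2'). (\<Sum>\<xi>\<in>edges P - {\<beta>}. length (snd h \<xi>)) \<le> 1"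
        using less.hyps[of \<Gamma>2 g2] m2(4) m1(4) sf2 le2 leE pe2 by auto
      have s1: "(\<Sum>\<xi>\<in>edges P - {\<beta>}. length (snd g1 \<xi>)) = 1"
      proof -
        have "(\<Sum>\<xi>\<in>edges P - {\<beta>}. length (snd g1 \<xi>)) = (\<Sum>\<xi>\<in>edges P - {\<beta>}. if \<xi> = e then 1 else 0)"
          using le0 c1 unfolding line_empty_def by (intro sum.cong) auto
        also have "\<dots> = 1" using prot \<open>e \<in> edges P - {\<beta>}\<close> unfolding cfsm_protocol_def by simp
        finally show ?thesis .
      qed
      have img: "image_trans P k g ((a,g1)#(a2,g2)#\<Gamma>2') = image_trans P k g \<Gamma>" for k
        using m1(2) m2(2) r(2) by (metis image_trans.simps(2))
      show ?thesis
        apply (rule exI[of _ "(a,g1)#(a2,g2)#\<Gamma>2'"])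
        using sa sa2 r s0 s1 img by simp
    qed
  qed
qed



lemma mod_suc_lt: "k < (n::nat) \<Longrightarrow> (k+1) mod n = (if k + 1 = n then 0 else k + 1)"
  by auto

lemma cyclic_struct:
  assumes cy: "cyclic P" and bE: "\<beta> \<in> edges P"
  shows "\<exists>rank::'n \<Rightarrow> nat. (\<forall>e\<in>edges P - {\<beta>}. rank (etail P e) < rank (ehead P e)) \<and>
          (\<forall>e\<in>edges P. \<forall>e'\<in>edges P. ehead P e = ehead P e' \<longrightarrow> e = e')"
proof -
  obtain vs es where c: "vs \<noteq> []" "length vs = length es" "distinct vs" "distinct es"
     "set vs = nodes P" "set es = edges P"
     "\<forall>k<length es. etail P (es ! k) = vs ! k \<and> ehead P (es ! k) = vs ! ((k + 1) mod length vs)"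
    using cy unfolding cyclic_def by blast
  define n where "n = length vs"
  have les: "length es = n" using c(2) n_def by simp
  have "\<beta> \<in> set es" using bE c(6) by auto
  then obtain p where p: "p < n" "es ! p = \<beta>" using les by (auto simp: in_set_conv_nth)
  define idx where "idx v = (LEAST k. k < n \<and> vs!k = v)" for v
  have idx: "idx (vs!k) = k" if "k < n" for k
    unfolding idx_def
  proof (rule Least_equality)
    show "k < n \<and> vs ! k = vs ! k" using that by simp
    fix y assume "y < n \<and> vs ! y = vs ! k"
    then have "y = k" using nth_eq_iff_index_eq[OF c(3), of y k] that n_def by simp
    then show "k \<le> y" by simp
  qed
  define rank where "rank v = (if idx v > p then idx v - Suc p else idx v + n - Suc p)" for v
  have R: "rank (etail P e) < rank (ehead P e)" if "e \<in> edges P - {\<beta>}" for e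
  proof -
    have "e \<in> set es" using that c(6) by auto
    then obtain k where k: "k < n" "es ! k = e" using les by (auto simp: in_set_conv_nth)
    have kp: "k \<noteq> p" using k p that by auto
    have t: "etail P e = vs ! k" and hd: "ehead P e = vs ! ((k+1) mod n)" using c(7) k les n_def by auto
    show ?thesis
    proof (cases "k + 1 = n")
      case True
      then have "ehead P e = vs ! 0" using hd by simp
      then show ?thesis using t idx[of k] idx[of 0] k kp p True unfolding rank_def by auto
    next
      case False
      then have "ehead P e = vs ! (k+1)" using hd k by simp
      then show ?thesis using t idx[of k] idx[of "k+1"] k kp p False unfolding rank_def by auto
    qed
  qed
  have U: "e = e'" if "e \<in> edges P" "e' \<in> edges P" "ehead P e = ehead P e'" for e e'
  proof -
    have "e \<in> set es" using that c(6) by auto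
    then obtain k where k: "k < n" "es ! k = e" using les by (auto simp: in_set_conv_nth)
    have "e' \<in> set es" using that c(6) by auto
    then obtain l where l: "l < n" "es ! l = e'" using les by (auto simp: in_set_conv_nth)
    have "vs ! ((k+1) mod n) = vs ! ((l+1) mod n)" using c(7) k l les n_def that(3) by auto
    moreover have "(k+1) mod n < n" "(l+1) mod n < n" using k by auto
    ultimately have "(k+1) mod n = (l+1) mod n" using nth_eq_iff_index_eq[OF c(3)] n_def by simp
    then have "k = l" using k l mod_suc_lt[of k n] mod_suc_lt[of l n] by (auto split: if_splits)
    then show ?thesis using k l by simp
  qed
  show ?thesis using R U by blast
qed


theorem theorem5p2:
  fixes P :: "('n, 'e, 'm, 's) cfsm"
    and g0 :: "('n, 'e, 'm, 's) gstate"
    and ss :: "('m act \<times> ('n, 'e, 'm, 's) gstate) list"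
    and \<beta> :: 'e
  assumes "cfsm_protocol P"
    and "cyclic P"
    and "is_path P g0 ss"
    and "snd g0 = C0"
    and "snd (path_end g0 ss) = C0"
    and "\<beta> \<in> edges P"
  shows "\<exists>g0' ss'. is_path P g0' ss' \<and> locally_equal P g0 ss g0' ss' \<and>
           (\<forall>g\<in>set (path_states g0' ss').
              (\<Sum>\<xi>\<in>edges P - {\<beta>}. length (snd g \<xi>)) \<le> 1)"
proof -
  obtain rank :: "'n \<Rightarrow> nat" where rk: "\<forall>e\<in>edges P - {\<beta>}. rank (etail P e) < rank (ehead P e)"
    and uq: "\<forall>e\<in>edges P. \<forall>e'\<in>edges P. ehead P e = ehead P e' \<longrightarrow> e = e'"
    using cyclic_struct[OF assms(2,6)] by blast
  have sf: "steps_from P g0 ss" and re: "reachable P g0" using assms(3) unfolding is_path_def by auto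
  have le0: "line_empty P \<beta> g0" using assms(4) unfolding line_empty_def C0_def by simp
  have leE: "line_empty P \<beta> (path_end g0 ss)" using assms(5) unfolding line_empty_def C0_def by simp
  obtain \<Gamma>' where r: "steps_from P g0 \<Gamma>'" "\<forall>k. image_trans P k g0 \<Gamma>' = image_trans P k g0 ss"
    "\<forall>h\<in>set (path_states g0 \<Gamma>'). (\<Sum>\<xi>\<in>edges P - {\<beta>}. length (snd h \<xi>)) \<le> 1"
    using main[OF assms(1,6) rk uq sf le0 leE] by blast
  show ?thesis
    using r re by (intro exI[of _ g0] exI[of _ \<Gamma>']) (auto simp: is_path_def locally_equal_def path_image_def)
qed

end
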